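(* Let $\Gamma_{\mathrm{comp}}$ be the set of all sufficiently pure branches $A$ such that every finite subset of $A$ is satisfiable. Then $\Gamma_{\mathrm{comp}}$ is a complete abstract consistency class.
   Context: Types: a countable set of base types including a distinguished $o$; other base types are sorts ($\alpha$). Types: base types and $\sigma\tau$ (functions from $\sigma$ to $\tau$; $\sigma\tau\mu=\sigma(\tau\mu)$). Countably many names, each with a unique type, infinitely many of each type. Terms: names; $st:\mu$ for $s:\tau\mu,t:\tau$; $\lambda x.t:\sigma\tau$ for a name $x:\sigma$, $t:\tau$. Logical constants: $\neg:oo$, $=_\sigma:\sigma\sigma o$; other names are variables. Formulas: terms of type $o$; $s=_\sigma t$ is $(=_\sigma s)t$; $s\neq_\sigma t$ is $\neg(s=_\sigma t)$. Semantics: a frame $\mathcal{D}$ maps types to nonempty sets with $\mathcal{D}(\sigma\tau)\subseteq(\mathcal{D}\sigma\to\mathcal{D}\tau)$. An assignment $\mathcal{I}$ into $\mathcal{D}$ extends $\mathcal{D}$ and maps names $x:\sigma$ into $\mathcal{D}\sigma$; $\mathcal{I}^x_a$ is the update. Partial evaluation: $\hat{\mathcal{I}}x=\mathcal{I}x$; $\hat{\mathcal{I}}(st)=(\hat{\mathcal{I}}s)(\hat{\mathcal{I}}t)$ when defined; $\hat{\mathcal{I}}(\lambda x.s)=f$ if $\lambda x.s:\sigma\tau$, $f\in\mathcal{D}(\sigma\tau)$ and $\widehat{\mathcal{I}^x_a}s=fa$ for all $a\in\mathcal{D}\sigma$. Interpretation: assignment with total evaluation. Logical: $\mathcal{I}o=\{0,1\}$,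 $\mathcal{I}(\neg)$ negation, $\mathcal{I}(=_\sigma)$ identity. A set of formulas is satisfiable if some logical interpretation evaluates all of them to $1$. Normalization: fixed type-preserving total $[\cdot]$; $s$ normal iff $[s]=s$; $[[s]]=[s]$; $[[s]t]=[st]$; $[xs_1\dots s_n]=x[s_1]\dots[s_n]$ for a name $x$, $n\ge0$, $xs_1\dots s_n$ of base type; $\hat{\mathcal{I}}[s]=\hat{\mathcal{I}}s$ for every interpretation $\mathcal{I}$. A branch is a set of normal formulas. A branch $A$ is sufficiently pure if for every type $\sigma$ there are infinitely many variables of type $\sigma$ not occurring free in the formulas of $A$. An abstract consistency class is a set $\Gamma$ of branches such that every $A\in\Gamma$ satisfies ($x$ ranges over variables): (DN) if $\neg\neg s\in A$ then $A\cup\{s\}\in\Gamma$; (BQ) if $s=_ot\in A$ then $A\cup\{s,t\}\in\Gamma$ or $A\cup\{\neg s,\neg t\}\in\Gamma$; (BE) if $s\neq_ot\in A$ then $A\cup\{s,\neg t\}\in\Gamma$ or $A\cup\{\neg s,t\}\in\Gamma$; (FQ) if $s=_{\sigma\tau}t\in A$ then $A\cup\{[su]=[tu]\}\in\Gamma$ for every normal $u:\sigma$; (FE) if $s\neq_{\sigma\tau}t\in A$ then $A\cup\{[sx]\neq[tx]\}\in\Gamma$ for some variable $x$; (Mat) if $xs_1\dots s_n,\neg xt_1\dots t_n\in A$ then $n\ge1$ and $A\cup\{s_i\neq t_i\}\in\Gamma$ for some $i$; (Dec) if $xs_1\dots s_n\neq_\alpha xt_1\dots t_n\in A$ then $n\ge1$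 and $A\cup\{s_i\neq t_i\}\in\Gamma$ for some $i$; (Con) if $s=_\alpha t,u\neq_\alpha v\in A$ then $A\cup\{s\neq u,t\neq u\}\in\Gamma$ or $A\cup\{s\neq v,t\neq v\}\in\Gamma$. $\Gamma$ is complete if for all $A\in\Gamma$ and normal formulas $s$, $A\cup\{s\}\in\Gamma$ or $A\cup\{\neg s\}\in\Gamma$. *)

theory Defs
  imports Main
begin

text \<open>Base types are indexed by natural numbers; Base 0 is the distinguished type o,
  all other base types are sorts.\<close>
datatype ty = Base nat | Fun ty ty

abbreviation tyo :: ty where "tyo \<equiv> Base 0"

definition is_sort :: "ty \<Rightarrow> bool" where
  "is_sort \<sigma> \<longleftrightarrow> (\<exists>n. \<sigma> = Base (Suc n))"

datatype name = Var nat ty | Neg | Eq ty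

fun ntype :: "name \<Rightarrow> ty" where
  "ntype (Var n \<sigma>) = \<sigma>"
| "ntype Neg = Fun tyo tyo"
| "ntype (Eq \<sigma>) = Fun \<sigma> (Fun \<sigma> tyo)"

definition is_var :: "name \<Rightarrow> bool" where
  "is_var x \<longleftrightarrow> (\<exists>n \<sigma>. x = Var n \<sigma>)"

text \<open>Raw terms; the terms of the paper are the well-typed raw terms.\<close>
datatype tm = Nm name | App tm tm | Lam name tm

fun typeof :: "tm \<Rightarrow> ty option" where
  "typeof (Nm x) = Some (ntype x)"
| "typeof (App s t) =
     (case typeof s of
        Some (Fun \<sigma> \<tau>) \<Rightarrow> (if typeof t = Some \<sigma> then Some \<tau> else None)
      | _ \<Rightarrow> None)"
| "typeof (Lam x t) = map_option (Fun (ntype x)) (typeof t)"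

definition wt :: "tm \<Rightarrow> bool" where
  "wt t \<longleftrightarrow> typeof t \<noteq> None"

definition tyof :: "tm \<Rightarrow> ty" where
  "tyof t = the (typeof t)"

definition is_formula :: "tm \<Rightarrow> bool" where
  "is_formula t \<longleftrightarrow> typeof t = Some tyo"

primrec frees :: "tm \<Rightarrow> name set" where
  "frees (Nm x) = {x}"
| "frees (App s t) = frees s \<union> frees t"
| "frees (Lam x t) = frees t - {x}"

definition neg :: "tm \<Rightarrow> tm" where
  "neg s = App (Nm Neg) s"

definition eq :: "ty \<Rightarrow> tm \<Rightarrow> tm \<Rightarrow> tm" where
  "eq \<sigma> s t = App (App (Nm (Eq \<sigma>)) s) t"

definition neq :: "ty \<Rightarrow> tm \<Rightarrow> tm \<Rightarrow> tm" where
  "neq \<sigma> s t = neg (eq \<sigma> s t)"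

definition apps :: "tm \<Rightarrow> tm list \<Rightarrow> tm" where
  "apps h ss = foldl App h ss"

text \<open>Semantic values: truth values are B False (=0) and B True (=1); other values
  are drawn from an arbitrary universe type 'u.\<close>
datatype 'u dval = B bool | U 'u

text \<open>A frame is given by D (a nonempty set for every type) together with an
  application operation ap; the conditions say that every element of D(sigma tau)
  acts (via ap) as a function from D sigma to D tau, and distinct elements act as
  distinct functions, i.e. D(sigma tau) is (identified with) a subset of
  D sigma -> D tau.\<close>
definition frame :: "(ty \<Rightarrow> 'v set) \<Rightarrow> ('v \<Rightarrow> 'v \<Rightarrow> 'v) \<Rightarrow> bool" where
  "frame D ap \<longleftrightarrow>
     (\<forall>\<sigma>. D \<sigma> \<noteq> {}) \<and>
     (\<forall>\<sigma> \<tau>. \<forall>f\<in>D (Fun \<sigma> \<tau>). \<forall>a\<in>D \<sigma>. ap f a \<in> D \<tau>) \<and>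
     (\<forall>\<sigma> \<tau>. \<forall>f\<in>D (Fun \<sigma> \<tau>). \<forall>g\<in>D (Fun \<sigma> \<tau>).
        (\<forall>a\<in>D \<sigma>. ap f a = ap g a) \<longrightarrow> f = g)"

definition assignment :: "(ty \<Rightarrow> 'v set) \<Rightarrow> ('v \<Rightarrow> 'v \<Rightarrow> 'v) \<Rightarrow> (name \<Rightarrow> 'v) \<Rightarrow> bool" where
  "assignment D ap I \<longleftrightarrow> frame D ap \<and> (\<forall>x. I x \<in> D (ntype x))"

primrec eval :: "(ty \<Rightarrow> 'v set) \<Rightarrow> ('v \<Rightarrow> 'v \<Rightarrow> 'v) \<Rightarrow> (name \<Rightarrow> 'v) \<Rightarrow> tm \<Rightarrow> 'v option" where
  "eval D ap I (Nm x) = Some (I x)"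
| "eval D ap I (App s t) =
     (case eval D ap I s of
        None \<Rightarrow> None
      | Some f \<Rightarrow> (case eval D ap I t of None \<Rightarrow> None | Some a \<Rightarrow> Some (ap f a)))"
| "eval D ap I (Lam x s) =
     (case typeof (Lam x s) of
        None \<Rightarrow> None
      | Some \<rho> \<Rightarrow>
          (if \<exists>f\<in>D \<rho>. \<forall>a\<in>D (ntype x). eval D ap (I(x := a)) s = Some (ap f a)
           then Some (SOME f. f \<in> D \<rho> \<and> (\<forall>a\<in>D (ntype x). eval D ap (I(x := a)) s = Some (ap f a)))
           else None))"

definition is_interp :: "(ty \<Rightarrow> 'v set) \<Rightarrow> ('v \<Rightarrow> 'v \<Rightarrow> 'v) \<Rightarrow> (name \<Rightarrow> 'v) \<Rightarrow> bool" where
  "is_interp D ap I \<longleftrightarrow> assignment D ap I \<and> (\<forall>t. wt t \<longrightarrow> eval D ap I t \<noteq> None)"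

definition logical :: "(ty \<Rightarrow> 'u dval set) \<Rightarrow> ('u dval \<Rightarrow> 'u dval \<Rightarrow> 'u dval) \<Rightarrow> (name \<Rightarrow> 'u dval) \<Rightarrow> bool" where
  "logical D ap I \<longleftrightarrow> is_interp D ap I \<and>
     D tyo = {B False, B True} \<and>
     (\<forall>b. ap (I Neg) (B b) = B (\<not> b)) \<and>
     (\<forall>\<sigma>. \<forall>a\<in>D \<sigma>. \<forall>b\<in>D \<sigma>. ap (ap (I (Eq \<sigma>)) a) b = B (a = b))"

definition satisfiable :: "'u itself \<Rightarrow> tm set \<Rightarrow> bool" where
  "satisfiable _ S \<longleftrightarrow>
     (\<exists>(D :: ty \<Rightarrow> 'u dval set) ap I. logical D ap I \<and> (\<forall>s\<in>S. eval D ap I s = Some (B True)))"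

definition normalizer :: "'u itself \<Rightarrow> (tm \<Rightarrow> tm) \<Rightarrow> bool" where
  "normalizer _ nrm \<longleftrightarrow>
     (\<forall>s \<sigma>. typeof s = Some \<sigma> \<longrightarrow> typeof (nrm s) = Some \<sigma>) \<and>
     (\<forall>s. wt s \<longrightarrow> nrm (nrm s) = nrm s) \<and>
     (\<forall>s t. wt (App s t) \<longrightarrow> nrm (App (nrm s) t) = nrm (App s t)) \<and>
     (\<forall>x ss n. typeof (apps (Nm x) ss) = Some (Base n) \<longrightarrow>
        nrm (apps (Nm x) ss) = apps (Nm x) (map nrm ss)) \<and>
     (\<forall>(D :: ty \<Rightarrow> 'u dval set) ap I. is_interp D ap I \<longrightarrow>
        (\<forall>s. wt s \<longrightarrow> eval D ap I (nrm s) = eval D ap I s))"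

definition normal :: "(tm \<Rightarrow> tm) \<Rightarrow> tm \<Rightarrow> bool" where
  "normal nrm s \<longleftrightarrow> wt s \<and> nrm s = s"

definition branch :: "(tm \<Rightarrow> tm) \<Rightarrow> tm set \<Rightarrow> bool" where
  "branch nrm A \<longleftrightarrow> (\<forall>s\<in>A. is_formula s \<and> nrm s = s)"

definition sufficiently_pure :: "tm set \<Rightarrow> bool" where
  "sufficiently_pure A \<longleftrightarrow>
     (\<forall>\<sigma>. infinite {x. is_var x \<and> ntype x = \<sigma> \<and> (\<forall>s\<in>A. x \<notin> frees s)})"

definition acc :: "(tm \<Rightarrow> tm) \<Rightarrow> tm set set \<Rightarrow> bool" where
  "acc nrm \<Gamma> \<longleftrightarrow> (\<forall>A\<in>\<Gamma>. branch nrm A \<and>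
     \<comment> \<open>DN\<close>
     (\<forall>s. neg (neg s) \<in> A \<longrightarrow> A \<union> {s} \<in> \<Gamma>) \<and>
     \<comment> \<open>BQ\<close>
     (\<forall>s t. eq tyo s t \<in> A \<longrightarrow> A \<union> {s, t} \<in> \<Gamma> \<or> A \<union> {neg s, neg t} \<in> \<Gamma>) \<and>
     \<comment> \<open>BE\<close>
     (\<forall>s t. neq tyo s t \<in> A \<longrightarrow> A \<union> {s, neg t} \<in> \<Gamma> \<or> A \<union> {neg s, t} \<in> \<Gamma>) \<and>
     \<comment> \<open>FQ\<close>
     (\<forall>\<sigma> \<tau> s t. eq (Fun \<sigma> \<tau>) s t \<in> A \<longrightarrow>
        (\<forall>u. normal nrm u \<and> typeof u = Some \<sigma> \<longrightarrow>
           A \<union> {eq \<tau> (nrm (App s u)) (nrm (App t u))} \<in> \<Gamma>)) \<and>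
     \<comment> \<open>FE\<close>
     (\<forall>\<sigma> \<tau> s t. neq (Fun \<sigma> \<tau>) s t \<in> A \<longrightarrow>
        (\<exists>x. is_var x \<and> ntype x = \<sigma> \<and>
           A \<union> {neq \<tau> (nrm (App s (Nm x))) (nrm (App t (Nm x)))} \<in> \<Gamma>)) \<and>
     \<comment> \<open>Mat\<close>
     (\<forall>x ss ts. is_var x \<and> length ss = length ts \<and>
        apps (Nm x) ss \<in> A \<and> neg (apps (Nm x) ts) \<in> A \<longrightarrow>
        length ss \<ge> 1 \<and>
        (\<exists>i<length ss. A \<union> {neq (tyof (ss ! i)) (ss ! i) (ts ! i)} \<in> \<Gamma>)) \<and>
     \<comment> \<open>Dec\<close>
     (\<forall>\<alpha> x ss ts. is_sort \<alpha> \<and> is_var x \<and> length ss = length ts \<and>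
        neq \<alpha> (apps (Nm x) ss) (apps (Nm x) ts) \<in> A \<longrightarrow>
        length ss \<ge> 1 \<and>
        (\<exists>i<length ss. A \<union> {neq (tyof (ss ! i)) (ss ! i) (ts ! i)} \<in> \<Gamma>)) \<and>
     \<comment> \<open>Con\<close>
     (\<forall>\<alpha> s t u v. is_sort \<alpha> \<and> eq \<alpha> s t \<in> A \<and> neq \<alpha> u v \<in> A \<longrightarrow>
        A \<union> {neq \<alpha> s u, neq \<alpha> t u} \<in> \<Gamma> \<or> A \<union> {neq \<alpha> s v, neq \<alpha> t v} \<in> \<Gamma>))"

definition complete_class :: "(tm \<Rightarrow> tm) \<Rightarrow> tm set set \<Rightarrow> bool" where
  "complete_class nrm \<Gamma> \<longleftrightarrow>
     (\<forall>A\<in>\<Gamma>. \<forall>s. is_formula s \<and> nrm s = s \<longrightarrow> A \<union> {s} \<in> \<Gamma> \<or> A \<union> {neg s} \<in> \<Gamma>)"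

definition Gamma_comp :: "'u itself \<Rightarrow> (tm \<Rightarrow> tm) \<Rightarrow> tm set set" where
  "Gamma_comp T nrm =
     {A. branch nrm A \<and> sufficiently_pure A \<and>
         (\<forall>F. F \<subseteq> A \<and> finite F \<longrightarrow> satisfiable T F)}"

end

theory Submission imports Defs begin

lemma typeof_App: "typeof (App s t) = Some \<tau> \<Longrightarrow> \<exists>\<sigma>. typeof s = Some (Fun \<sigma> \<tau>) \<and> typeof t = Some \<sigma>"
  by (auto split: option.splits ty.splits if_splits)

lemma eval_typed: "assignment D ap I \<Longrightarrow> typeof t = Some \<sigma> \<Longrightarrow> eval D ap I t = Some v \<Longrightarrow> v \<in> D \<sigma>"
proof (induction t arbitrary: \<sigma> v)
  case (Nm x)
  then show ?case by (auto simp: assignment_def)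
next
  case (App s t)
  from typeof_App[OF App.prems(2)] obtain \<rho> where r: "typeof s = Some (Fun \<rho> \<sigma>)" "typeof t = Some \<rho>" by blast
  from App.prems(3) obtain f a where fa: "eval D ap I s = Some f" "eval D ap I t = Some a" "v = ap f a"
    by (simp split: option.splits)
  have "f \<in> D (Fun \<rho> \<sigma>)" using App.IH(1)[OF App.prems(1) r(1) fa(1)] .
  moreover have "a \<in> D \<rho>" using App.IH(2)[OF App.prems(1) r(2) fa(2)] .
  moreover have "frame D ap" using App.prems(1) by (simp add: assignment_def)
  ultimately show ?case using fa(3) unfolding frame_def by blast
next
  case (Lam x s)
  let ?P = "\<lambda>f. f \<in> D \<sigma> \<and> (\<forall>a\<in>D (ntype x). eval D ap (I(x := a)) s = Some (ap f a))"
  from Lam.prems(2,3) have h: "(\<exists>f\<in>D \<sigma>. \<forall>a\<in>D (ntype x). eval D ap (I(x := a)) s = Some (ap f a)) \<and> v = (SOME f. ?P f)"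
    by (simp del: typeof.simps split: if_splits)
  hence "\<exists>f. ?P f" by (simp only: Bex_def)
  hence "(SOME f. ?P f) \<in> D \<sigma>" by (rule someI_ex[THEN conjunct1])
  moreover have "v = (SOME f. ?P f)" using h by (rule conjunct2)
  ultimately show ?case by (simp only:)
qed

lemma eval_frees: "(\<forall>y\<in>frees t. I y = J y) \<Longrightarrow> eval D ap I t = eval D ap J t"
proof (induction t arbitrary: I J)
  case (Nm x) then show ?case by simp
next
  case (App s t)
  have "eval D ap I s = eval D ap J s" "eval D ap I t = eval D ap J t"
    using App.prems by (auto intro: App.IH)
  then show ?case by (simp only: eval.simps)
next
  case (Lam x s)
  have h: "\<And>a. eval D ap (I(x:=a)) s = eval D ap (J(x:=a)) s"
    using Lam.prems by (intro Lam.IH) auto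
  show ?case by (simp only: eval.simps h)
qed

lemma interp_upd:
  assumes "is_interp D ap I" "a \<in> D (ntype x)"
  shows "is_interp D ap (I(x:=a))"
proof -
  have "assignment D ap (I(x:=a))" using assms by (auto simp: is_interp_def assignment_def)
  moreover have "eval D ap (I(x:=a)) t \<noteq> None" if "wt t" for t
  proof -
    from that obtain \<tau> where t: "typeof t = Some \<tau>" by (auto simp: wt_def)
    hence "wt (Lam x t)" by (simp add: wt_def)
    hence ne: "eval D ap I (Lam x t) \<noteq> None" using assms(1) by (auto simp: is_interp_def)
    have "typeof (Lam x t) = Some (Fun (ntype x) \<tau>)" using t by simp
    with ne have "\<exists>f\<in>D (Fun (ntype x) \<tau>). \<forall>a\<in>D (ntype x). eval D ap (I(x := a)) t = Some (ap f a)"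
      by (simp del: typeof.simps split: if_splits)
    then show ?thesis using assms(2) by auto
  qed
  ultimately show ?thesis by (simp add: is_interp_def)
qed

lemma logical_upd:
  assumes "logical D ap I" "is_var x" "a \<in> D (ntype x)"
  shows "logical D ap (I(x:=a))"
proof -
  have "x \<noteq> Neg" "\<And>\<sigma>. x \<noteq> Eq \<sigma>" using assms(2) by (auto simp: is_var_def)
  then show ?thesis using assms interp_upd[of D ap I a x] by (auto simp: logical_def)
qed

lemma eval_apps_cong:
  "eval D ap I h = eval D ap I h' \<Longrightarrow> list_all2 (\<lambda>s t. eval D ap I s = eval D ap I t) ss ts
   \<Longrightarrow> eval D ap I (apps h ss) = eval D ap I (apps h' ts)"
proof (induction ss arbitrary: h h' ts)
  case Nil then show ?case by (simp add: apps_def)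
next
  case (Cons s ss)
  then obtain t ts' where ts: "ts = t # ts'" by (cases ts) auto
  have "eval D ap I (App h s) = eval D ap I (App h' t)" using Cons.prems ts
    by (simp only: eval.simps list_all2_Cons)
  then show ?case using Cons ts by (simp add: apps_def)
qed

lemma eval_total: "logical D ap I \<Longrightarrow> typeof s = Some \<sigma> \<Longrightarrow> \<exists>v. eval D ap I s = Some v \<and> v \<in> D \<sigma>"
proof -
  assume l: "logical D ap I" and t: "typeof s = Some \<sigma>"
  hence i: "is_interp D ap I" by (simp add: logical_def)
  hence "eval D ap I s \<noteq> None" using t by (simp add: is_interp_def wt_def)
  then obtain v where v: "eval D ap I s = Some v" by blast
  have "v \<in> D \<sigma>" using eval_typed[OF _ t v] i by (simp add: is_interp_def)
  with v show ?thesis by blast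
qed

lemma eval_eq:
  assumes "logical D ap I" "typeof s = Some \<sigma>" "typeof t = Some \<sigma>"
  shows "eval D ap I (eq \<sigma> s t) = Some (B (eval D ap I s = eval D ap I t))"
proof -
  obtain a b where "eval D ap I s = Some a" "a \<in> D \<sigma>" "eval D ap I t = Some b" "b \<in> D \<sigma>"
    using eval_total[OF assms(1)] assms(2,3) by blast
  then show ?thesis using assms(1) by (simp add: eq_def logical_def)
qed

lemma eval_neg:
  assumes "logical D ap I" "typeof s = Some tyo"
  shows "eval D ap I (neg s) = Some (B (eval D ap I s \<noteq> Some (B True)))"
proof -
  obtain a where "eval D ap I s = Some a" "a \<in> D tyo"
    using eval_total[OF assms(1)] assms(2) by blast
  then show ?thesis using assms(1) by (auto simp: neg_def logical_def)
qed

lemma eval_fml: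
  assumes "logical D ap I" "typeof s = Some tyo"
  shows "eval D ap I s = Some (B True) \<or> eval D ap I s = Some (B False)"
  using eval_total[OF assms] assms(1) by (auto simp: logical_def)

lemma finite_frees: "finite (frees t)" by (induction t) auto

lemma apps_inj: "foldl App h ss = foldl App h' ts \<Longrightarrow> length ss = length ts \<Longrightarrow> h = h' \<and> ss = ts"
proof (induction ss arbitrary: h h' ts)
  case Nil then show ?case by simp
next
  case (Cons s ss)
  then obtain t ts' where ts: "ts = t # ts'" by (cases ts) auto
  from Cons.prems ts have "App h s = App h' t \<and> ss = ts'" by (intro Cons.IH) auto
  then show ?case using ts by simp
qed

lemma eq_apps: "eq \<sigma> s t = apps (Nm (Eq \<sigma>)) [s,t]" by (simp add: eq_def apps_def)
lemma neg_apps: "neg s = apps (Nm Neg) [s]" by (simp add: neg_def apps_def)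

lemma apps_typed: "typeof (apps h ss) = Some \<tau> \<Longrightarrow>
  \<exists>\<sigma>s. length \<sigma>s = length ss \<and> (\<forall>i<length ss. typeof (ss!i) = Some (\<sigma>s!i)) \<and> typeof h = Some (foldr Fun \<sigma>s \<tau>)"
proof (induction ss arbitrary: h)
  case Nil then show ?case by (simp add: apps_def)
next
  case (Cons s ss)
  have "typeof (apps (App h s) ss) = Some \<tau>" using Cons.prems by (simp add: apps_def)
  from Cons.IH[OF this] obtain \<sigma>s where s: "length \<sigma>s = length ss"
    "\<forall>i<length ss. typeof (ss!i) = Some (\<sigma>s!i)" "typeof (App h s) = Some (foldr Fun \<sigma>s \<tau>)" by blast
  from typeof_App[OF s(3)] obtain \<rho> where r: "typeof h = Some (Fun \<rho> (foldr Fun \<sigma>s \<tau>))" "typeof s = Some \<rho>" by blast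
  show ?case
  proof (intro exI[of _ "\<rho> # \<sigma>s"] conjI)
    show "\<forall>i<length (s # ss). typeof ((s # ss) ! i) = Some ((\<rho> # \<sigma>s) ! i)"
      using s(2) r(2) by (auto simp: nth_Cons split: nat.splits)
  qed (use s r in auto)
qed

lemma foldr_Fun_inj: "foldr Fun as \<tau> = foldr Fun bs \<tau> \<Longrightarrow> length as = length bs \<Longrightarrow> as = bs"
proof (induction as arbitrary: bs)
  case Nil then show ?case by simp
next
  case (Cons a as)
  then obtain b bs' where "bs = b # bs'" by (cases bs) auto
  with Cons show ?case by auto
qed

lemma apps_same_types:
  assumes "typeof (apps h ss) = Some \<tau>" "typeof (apps h ts) = Some \<tau>" "length ss = length ts" "i < length ss"
  shows "\<exists>\<sigma>. typeof (ss!i) = Some \<sigma> \<and> typeof (ts!i) = Some \<sigma>"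
proof -
  obtain as where a: "length as = length ss" "\<forall>i<length ss. typeof (ss!i) = Some (as!i)" "typeof h = Some (foldr Fun as \<tau>)"
    using apps_typed[OF assms(1)] by blast
  obtain bs where b: "length bs = length ts" "\<forall>i<length ts. typeof (ts!i) = Some (bs!i)" "typeof h = Some (foldr Fun bs \<tau>)"
    using apps_typed[OF assms(2)] by blast
  have "as = bs" using a b assms(3) foldr_Fun_inj[of as \<tau> bs] by auto
  then show ?thesis using a b assms by auto
qed

lemma nrm_apps: "normalizer T nrm \<Longrightarrow> typeof (apps (Nm x) ss) = Some (Base n) \<Longrightarrow>
   nrm (apps (Nm x) ss) = apps (Nm x) (map nrm ss)"
  unfolding normalizer_def by blast

lemma nrm_idem: "normalizer T nrm \<Longrightarrow> wt s \<Longrightarrow> nrm (nrm s) = nrm s"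
  unfolding normalizer_def by blast

lemma nrm_type: "normalizer T nrm \<Longrightarrow> typeof s = Some \<sigma> \<Longrightarrow> typeof (nrm s) = Some \<sigma>"
  unfolding normalizer_def by blast

lemma nrm_eval: "normalizer TYPE('u) nrm \<Longrightarrow> is_interp (D :: ty \<Rightarrow> 'u dval set) ap I \<Longrightarrow> wt s \<Longrightarrow>
   eval D ap I (nrm s) = eval D ap I s"
  unfolding normalizer_def by blast

lemma apps_parts:
  assumes "normalizer T nrm" "typeof (apps (Nm x) ss) = Some (Base n)" "nrm (apps (Nm x) ss) = apps (Nm x) ss"
  shows "map nrm ss = ss"
  using nrm_apps[OF assms(1,2)] assms(3) apps_inj[of "Nm x" "map nrm ss" "Nm x" ss] by (simp add: apps_def)

lemma nrm_neg: "normalizer T nrm \<Longrightarrow> typeof s = Some tyo \<Longrightarrow> nrm s = s \<Longrightarrow> nrm (neg s) = neg s"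
  using nrm_apps[of T nrm Neg "[s]" 0] by (simp add: neg_apps) (simp add: apps_def)

lemma typeof_neg: "typeof (neg s) = Some \<tau> \<longleftrightarrow> typeof s = Some tyo \<and> \<tau> = tyo"
  by (auto simp: neg_def split: option.splits ty.splits if_splits)

lemma typeof_eq: "typeof (eq \<sigma> s t) = Some \<tau> \<longleftrightarrow> typeof s = Some \<sigma> \<and> typeof t = Some \<sigma> \<and> \<tau> = tyo"
  by (auto simp: eq_def split: option.splits ty.splits if_splits)

lemma typeof_neq: "typeof (neq \<sigma> s t) = Some \<tau> \<longleftrightarrow> typeof s = Some \<sigma> \<and> typeof t = Some \<sigma> \<and> \<tau> = tyo"
  by (simp add: neq_def typeof_neg typeof_eq)

lemma nrm_eq: "normalizer T nrm \<Longrightarrow> typeof s = Some \<sigma> \<Longrightarrow> typeof t = Some \<sigma> \<Longrightarrow> nrm s = s \<Longrightarrow> nrm t = t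
  \<Longrightarrow> nrm (eq \<sigma> s t) = eq \<sigma> s t"
  using nrm_apps[of T nrm "Eq \<sigma>" "[s,t]" 0] typeof_eq[of \<sigma> s t tyo] by (simp add: eq_apps)

lemma nrm_neq: "normalizer T nrm \<Longrightarrow> typeof s = Some \<sigma> \<Longrightarrow> typeof t = Some \<sigma> \<Longrightarrow> nrm s = s \<Longrightarrow> nrm t = t
  \<Longrightarrow> nrm (neq \<sigma> s t) = neq \<sigma> s t"
  unfolding neq_def by (rule nrm_neg) (auto simp: typeof_eq nrm_eq)

lemma neg_parts: "normalizer T nrm \<Longrightarrow> typeof (neg s) = Some tyo \<Longrightarrow> nrm (neg s) = neg s \<Longrightarrow> nrm s = s"
  using apps_parts[of T nrm Neg "[s]" 0] by (simp add: neg_apps)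

lemma eq_parts: "normalizer T nrm \<Longrightarrow> typeof (eq \<sigma> s t) = Some tyo \<Longrightarrow> nrm (eq \<sigma> s t) = eq \<sigma> s t \<Longrightarrow> nrm s = s \<and> nrm t = t"
  using apps_parts[of T nrm "Eq \<sigma>" "[s,t]" 0] by (simp add: eq_apps)

lemma eval_neq:
  assumes "logical D ap I" "typeof s = Some \<sigma>" "typeof t = Some \<sigma>"
  shows "eval D ap I (neq \<sigma> s t) = Some (B (eval D ap I s \<noteq> eval D ap I t))"
proof -
  have "typeof (eq \<sigma> s t) = Some tyo" using assms by (simp add: typeof_eq)
  then show ?thesis unfolding neq_def using eval_neg[OF assms(1)] eval_eq[OF assms] by simp
qed

lemma sat_mono: "satisfiable T S \<Longrightarrow> S' \<subseteq> S \<Longrightarrow> satisfiable T S'"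
  unfolding satisfiable_def by blast

lemma Gamma_intro:
  assumes "A \<in> Gamma_comp T nrm" "finite N" "branch nrm N" "\<And>F. F \<subseteq> A \<Longrightarrow> finite F \<Longrightarrow> satisfiable T (F \<union> N)"
  shows "A \<union> N \<in> Gamma_comp T nrm"
proof -
  have b: "branch nrm (A \<union> N)" using assms(1,3) by (auto simp: Gamma_comp_def branch_def)
  have sp: "sufficiently_pure (A \<union> N)" unfolding sufficiently_pure_def
  proof
    fix \<sigma>
    let ?S = "{x. is_var x \<and> ntype x = \<sigma> \<and> (\<forall>s\<in>A. x \<notin> frees s)}"
    have "infinite ?S" using assms(1) by (auto simp: Gamma_comp_def sufficiently_pure_def)
    moreover have "finite (\<Union>(frees ` N))" using assms(2) finite_frees by blast
    ultimately have "infinite (?S - \<Union>(frees ` N))" by (rule Diff_infinite_finite[rotated])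
    moreover have "?S - \<Union>(frees ` N) \<subseteq> {x. is_var x \<and> ntype x = \<sigma> \<and> (\<forall>s\<in>A \<union> N. x \<notin> frees s)}" by auto
    ultimately show "infinite {x. is_var x \<and> ntype x = \<sigma> \<and> (\<forall>s\<in>A \<union> N. x \<notin> frees s)}"
      using infinite_super by blast
  qed
  have "satisfiable T F" if "F \<subseteq> A \<union> N" "finite F" for F
  proof -
    have "satisfiable T ((F \<inter> A) \<union> N)" using assms(4) that by auto
    thus ?thesis by (rule sat_mono) (use that in auto)
  qed
  then show ?thesis using b sp by (simp add: Gamma_comp_def)
qed

lemma Gamma_ex:
  fixes N :: "'k \<Rightarrow> tm set"
  assumes A: "A \<in> Gamma_comp TYPE('u) nrm" and K: "finite K"
    and N: "\<And>k. k \<in> K \<Longrightarrow> finite (N k) \<and> branch nrm (N k)"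
    and P: "P \<subseteq> A" "finite P"
    and H: "\<And>(D::ty \<Rightarrow> 'u dval set) ap I. logical D ap I \<Longrightarrow> \<forall>p\<in>P. eval D ap I p = Some (B True)
       \<Longrightarrow> \<exists>k\<in>K. \<forall>n\<in>N k. eval D ap I n = Some (B True)"
  shows "\<exists>k\<in>K. A \<union> N k \<in> Gamma_comp TYPE('u) nrm"
proof (rule ccontr)
  assume c: "\<not> ?thesis"
  have "\<forall>k\<in>K. \<exists>F. F \<subseteq> A \<and> finite F \<and> \<not> satisfiable TYPE('u) (F \<union> N k)"
  proof
    fix k assume k: "k \<in> K"
    show "\<exists>F. F \<subseteq> A \<and> finite F \<and> \<not> satisfiable TYPE('u) (F \<union> N k)"
    proof (rule ccontr)
      assume "\<not> (\<exists>F. F \<subseteq> A \<and> finite F \<and> \<not> satisfiable TYPE('u) (F \<union> N k))"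
      hence "A \<union> N k \<in> Gamma_comp TYPE('u) nrm" using Gamma_intro[OF A] N[OF k] by blast
      with k c show False by blast
    qed
  qed
  then obtain F where F: "\<forall>k\<in>K. F k \<subseteq> A \<and> finite (F k) \<and> \<not> satisfiable TYPE('u) (F k \<union> N k)"
    by (rule bchoice[THEN exE])
  let ?G = "P \<union> \<Union>(F ` K)"
  have "?G \<subseteq> A" "finite ?G" using F P K by auto
  hence "satisfiable TYPE('u) ?G" using A by (auto simp: Gamma_comp_def)
  then obtain D :: "ty \<Rightarrow> 'u dval set" and ap I where DI: "logical D ap I" "\<forall>p\<in>?G. eval D ap I p = Some (B True)"
    unfolding satisfiable_def by blast
  from H[OF DI(1)] DI(2) obtain k where k: "k\<in>K" "\<forall>n\<in>N k. eval D ap I n = Some (B True)" by blast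
  have "\<forall>p\<in>F k \<union> N k. eval D ap I p = Some (B True)" using DI(2) k by blast
  hence "satisfiable TYPE('u) (F k \<union> N k)" unfolding satisfiable_def using DI(1) by blast
  with F k show False by blast
qed

lemma Gamma_one:
  assumes A: "A \<in> Gamma_comp TYPE('u) nrm" and N: "finite N" "branch nrm N"
    and P: "P \<subseteq> A" "finite P"
    and H: "\<And>(D::ty \<Rightarrow> 'u dval set) ap I. logical D ap I \<Longrightarrow> \<forall>p\<in>P. eval D ap I p = Some (B True)
       \<Longrightarrow> \<forall>n\<in>N. eval D ap I n = Some (B True)"
  shows "A \<union> N \<in> Gamma_comp TYPE('u) nrm"
proof -
  have "\<exists>k\<in>{()}. A \<union> (\<lambda>_. N) k \<in> Gamma_comp TYPE('u) nrm"
  proof (rule Gamma_ex[OF A, of "{()}" "\<lambda>_. N" P])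
    fix D :: "ty \<Rightarrow> 'u dval set" and ap I
    assume "logical D ap I" "\<forall>p\<in>P. eval D ap I p = Some (B True)"
    from H[OF this] show "\<exists>k\<in>{()}. \<forall>n\<in>N. eval D ap I n = Some (B True)" by blast
  qed (use N P in simp_all)
  then show ?thesis by blast
qed

lemma Gamma_or:
  assumes A: "A \<in> Gamma_comp TYPE('u) nrm" and N: "finite N1" "branch nrm N1" "finite N2" "branch nrm N2"
    and P: "P \<subseteq> A" "finite P"
    and H: "\<And>(D::ty \<Rightarrow> 'u dval set) ap I. logical D ap I \<Longrightarrow> \<forall>p\<in>P. eval D ap I p = Some (B True)
       \<Longrightarrow> (\<forall>n\<in>N1. eval D ap I n = Some (B True)) \<or> (\<forall>n\<in>N2. eval D ap I n = Some (B True))"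
  shows "A \<union> N1 \<in> Gamma_comp TYPE('u) nrm \<or> A \<union> N2 \<in> Gamma_comp TYPE('u) nrm"
proof -
  have "\<exists>k\<in>{True, False}. A \<union> (if k then N1 else N2) \<in> Gamma_comp TYPE('u) nrm"
  proof (rule Gamma_ex[OF A, of "{True, False}" "\<lambda>k. if k then N1 else N2" P])
    fix D :: "ty \<Rightarrow> 'u dval set" and ap I
    assume "logical D ap I" "\<forall>p\<in>P. eval D ap I p = Some (B True)"
    from H[OF this] show "\<exists>k\<in>{True, False}. \<forall>n\<in>(if k then N1 else N2). eval D ap I n = Some (B True)"
      by (metis (full_types) insertCI)
  qed (use N P in simp_all)
  then show ?thesis by auto
qed

lemma Gamma_fml: "A \<in> Gamma_comp T nrm \<Longrightarrow> s \<in> A \<Longrightarrow> typeof s = Some tyo \<and> nrm s = s"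
  by (auto simp: Gamma_comp_def branch_def is_formula_def)

context
  fixes nrm :: "tm \<Rightarrow> tm" and A :: "tm set"
  assumes nz: "normalizer TYPE('u) nrm" and AG: "A \<in> Gamma_comp TYPE('u) nrm"
begin

lemma DN_rule: "neg (neg s) \<in> A \<Longrightarrow> A \<union> {s} \<in> Gamma_comp TYPE('u) nrm"
proof -
  assume h: "neg (neg s) \<in> A"
  from Gamma_fml[OF AG h] have t: "typeof (neg (neg s)) = Some tyo" "nrm (neg (neg s)) = neg (neg s)" by auto
  have ts: "typeof s = Some tyo" "typeof (neg s) = Some tyo" using t(1) by (auto simp: typeof_neg)
  have "nrm (neg s) = neg s" using neg_parts[OF nz t] .
  hence ns: "nrm s = s" using neg_parts[OF nz ts(2)] by blast
  show ?thesis
  proof (rule Gamma_one[OF AG, of "{s}" "{neg (neg s)}"])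
    fix D :: "ty \<Rightarrow> 'u dval set" and ap I
    assume l: "logical D ap I" and "\<forall>p\<in>{neg (neg s)}. eval D ap I p = Some (B True)"
    then show "\<forall>n\<in>{s}. eval D ap I n = Some (B True)"
      using eval_neg[OF l ts(1)] eval_neg[OF l ts(2)] by simp
  qed (use h ts ns in \<open>auto simp: branch_def is_formula_def\<close>)
qed

lemma BQ_rule: "eq tyo s t \<in> A \<Longrightarrow> A \<union> {s, t} \<in> Gamma_comp TYPE('u) nrm \<or> A \<union> {neg s, neg t} \<in> Gamma_comp TYPE('u) nrm"
proof -
  assume h: "eq tyo s t \<in> A"
  from Gamma_fml[OF AG h] have t: "typeof (eq tyo s t) = Some tyo" "nrm (eq tyo s t) = eq tyo s t" by auto
  have ts: "typeof s = Some tyo" "typeof t = Some tyo" using t(1) by (auto simp: typeof_eq)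
  have ns: "nrm s = s" "nrm t = t" using eq_parts[OF nz t] by auto
  show ?thesis
  proof (rule Gamma_or[OF AG, of "{s,t}" "{neg s, neg t}" "{eq tyo s t}"])
    fix D :: "ty \<Rightarrow> 'u dval set" and ap I
    assume l: "logical D ap I" and "\<forall>p\<in>{eq tyo s t}. eval D ap I p = Some (B True)"
    hence e: "eval D ap I s = eval D ap I t" using eval_eq[OF l ts] by simp
    show "(\<forall>n\<in>{s,t}. eval D ap I n = Some (B True)) \<or> (\<forall>n\<in>{neg s, neg t}. eval D ap I n = Some (B True))"
      using eval_fml[OF l ts(1)] e eval_neg[OF l ts(1)] eval_neg[OF l ts(2)] by auto
  qed (use h ts ns nrm_neg[OF nz] in \<open>auto simp: branch_def is_formula_def typeof_neg\<close>)
qed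

lemma BE_rule: "neq tyo s t \<in> A \<Longrightarrow> A \<union> {s, neg t} \<in> Gamma_comp TYPE('u) nrm \<or> A \<union> {neg s, t} \<in> Gamma_comp TYPE('u) nrm"
proof -
  assume h: "neq tyo s t \<in> A"
  from Gamma_fml[OF AG h] have t: "typeof (neg (eq tyo s t)) = Some tyo" "nrm (neg (eq tyo s t)) = neg (eq tyo s t)"
    by (auto simp: neq_def)
  have ts: "typeof s = Some tyo" "typeof t = Some tyo" "typeof (eq tyo s t) = Some tyo" using t(1) by (auto simp: typeof_eq typeof_neg)
  have "nrm (eq tyo s t) = eq tyo s t" using neg_parts[OF nz t] .
  hence ns: "nrm s = s" "nrm t = t" using eq_parts[OF nz ts(3)] by auto
  show ?thesis
  proof (rule Gamma_or[OF AG, of "{s, neg t}" "{neg s, t}" "{neq tyo s t}"])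
    fix D :: "ty \<Rightarrow> 'u dval set" and ap I
    assume l: "logical D ap I" and "\<forall>p\<in>{neq tyo s t}. eval D ap I p = Some (B True)"
    hence e: "eval D ap I s \<noteq> eval D ap I t" using eval_neq[OF l ts(1,2)] by simp
    show "(\<forall>n\<in>{s, neg t}. eval D ap I n = Some (B True)) \<or> (\<forall>n\<in>{neg s, t}. eval D ap I n = Some (B True))"
      using eval_fml[OF l ts(1)] eval_fml[OF l ts(2)] e eval_neg[OF l ts(1)] eval_neg[OF l ts(2)] by auto
  qed (use h ts ns nrm_neg[OF nz] in \<open>auto simp: branch_def is_formula_def typeof_neg\<close>)
qed


lemma FQ_rule: "eq (Fun \<sigma> \<tau>) s t \<in> A \<Longrightarrow> normal nrm u \<Longrightarrow> typeof u = Some \<sigma> \<Longrightarrow>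
   A \<union> {eq \<tau> (nrm (App s u)) (nrm (App t u))} \<in> Gamma_comp TYPE('u) nrm"
proof -
  assume h: "eq (Fun \<sigma> \<tau>) s t \<in> A" and u: "normal nrm u" "typeof u = Some \<sigma>"
  from Gamma_fml[OF AG h] have t: "typeof (eq (Fun \<sigma> \<tau>) s t) = Some tyo" by auto
  have ts: "typeof s = Some (Fun \<sigma> \<tau>)" "typeof t = Some (Fun \<sigma> \<tau>)" using t by (auto simp: typeof_eq)
  have a: "typeof (App s u) = Some \<tau>" "typeof (App t u) = Some \<tau>" using ts u(2) by auto
  have w: "wt (App s u)" "wt (App t u)" using a by (auto simp: wt_def)
  have na: "typeof (nrm (App s u)) = Some \<tau>" "typeof (nrm (App t u)) = Some \<tau>" using nrm_type[OF nz] a by auto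
  have nn: "nrm (nrm (App s u)) = nrm (App s u)" "nrm (nrm (App t u)) = nrm (App t u)" using nrm_idem[OF nz] w by auto
  show ?thesis
  proof (rule Gamma_one[OF AG, of _ "{eq (Fun \<sigma> \<tau>) s t}"])
    fix D :: "ty \<Rightarrow> 'u dval set" and ap I
    assume l: "logical D ap I" and "\<forall>p\<in>{eq (Fun \<sigma> \<tau>) s t}. eval D ap I p = Some (B True)"
    hence e: "eval D ap I s = eval D ap I t" using eval_eq[OF l ts] by simp
    have i: "is_interp D ap I" using l by (simp add: logical_def)
    have "eval D ap I (nrm (App s u)) = eval D ap I (nrm (App t u))"
      using nrm_eval[OF nz i w(1)] nrm_eval[OF nz i w(2)] e by simp
    then show "\<forall>n\<in>{eq \<tau> (nrm (App s u)) (nrm (App t u))}. eval D ap I n = Some (B True)"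
      using eval_eq[OF l na] by simp
  qed (use h na nn nrm_eq[OF nz na nn] in \<open>auto simp: branch_def is_formula_def typeof_eq\<close>)
qed

lemma FE_rule: "neq (Fun \<sigma> \<tau>) s t \<in> A \<Longrightarrow>
   \<exists>x. is_var x \<and> ntype x = \<sigma> \<and> A \<union> {neq \<tau> (nrm (App s (Nm x))) (nrm (App t (Nm x)))} \<in> Gamma_comp TYPE('u) nrm"
proof -
  assume h: "neq (Fun \<sigma> \<tau>) s t \<in> A"
  from Gamma_fml[OF AG h] have t: "typeof (neq (Fun \<sigma> \<tau>) s t) = Some tyo" by auto
  have ts: "typeof s = Some (Fun \<sigma> \<tau>)" "typeof t = Some (Fun \<sigma> \<tau>)" using t by (auto simp: typeof_neq)
  have "infinite {x. is_var x \<and> ntype x = \<sigma> \<and> (\<forall>s\<in>A. x \<notin> frees s)}"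
    using AG by (auto simp: Gamma_comp_def sufficiently_pure_def)
  hence "{x. is_var x \<and> ntype x = \<sigma> \<and> (\<forall>s\<in>A. x \<notin> frees s)} \<noteq> {}" by (metis finite.emptyI)
  then obtain x where x: "is_var x" "ntype x = \<sigma>" "\<forall>s\<in>A. x \<notin> frees s" by blast
  have xst: "x \<notin> frees s" "x \<notin> frees t" using x(3) h by (auto simp: neq_def neg_def eq_def)
  have a: "typeof (App s (Nm x)) = Some \<tau>" "typeof (App t (Nm x)) = Some \<tau>" using ts x(2) by auto
  have w: "wt (App s (Nm x))" "wt (App t (Nm x))" using a by (auto simp: wt_def)
  have na: "typeof (nrm (App s (Nm x))) = Some \<tau>" "typeof (nrm (App t (Nm x))) = Some \<tau>" using nrm_type[OF nz] a by auto
  have nn: "nrm (nrm (App s (Nm x))) = nrm (App s (Nm x))" "nrm (nrm (App t (Nm x))) = nrm (App t (Nm x))"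
    using nrm_idem[OF nz] w by auto
  let ?n = "neq \<tau> (nrm (App s (Nm x))) (nrm (App t (Nm x)))"
  have "A \<union> {?n} \<in> Gamma_comp TYPE('u) nrm"
  proof (rule Gamma_intro[OF AG])
    show "branch nrm {?n}" using na nn nrm_neq[OF nz na nn] by (auto simp: branch_def is_formula_def typeof_neq)
  next
    fix F assume F: "F \<subseteq> A" "finite F"
    have "satisfiable TYPE('u) (insert (neq (Fun \<sigma> \<tau>) s t) F)"
      using AG F h by (auto simp: Gamma_comp_def)
    then obtain D :: "ty \<Rightarrow> 'u dval set" and ap I where l: "logical D ap I"
      and m: "\<forall>p\<in>insert (neq (Fun \<sigma> \<tau>) s t) F. eval D ap I p = Some (B True)"
      unfolding satisfiable_def by blast
    have "eval D ap I s \<noteq> eval D ap I t" using m eval_neq[OF l ts] by simp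
    moreover obtain f where f: "eval D ap I s = Some f" "f \<in> D (Fun \<sigma> \<tau>)" using eval_total[OF l ts(1)] by blast
    moreover obtain g where g: "eval D ap I t = Some g" "g \<in> D (Fun \<sigma> \<tau>)" using eval_total[OF l ts(2)] by blast
    ultimately have "f \<noteq> g" by simp
    moreover have fr: "frame D ap" using l by (simp add: logical_def is_interp_def assignment_def)
    ultimately obtain a where a0: "a \<in> D \<sigma>" "ap f a \<noteq> ap g a" using f(2) g(2) unfolding frame_def by blast
    let ?J = "I(x := a)"
    have lJ: "logical D ap ?J" using logical_upd[OF l x(1)] a0(1) x(2) by simp
    have iJ: "is_interp D ap ?J" using lJ by (simp add: logical_def)
    have same: "eval D ap ?J p = eval D ap I p" if "x \<notin> frees p" for p
      using eval_frees[of p ?J I] that by auto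
    have "eval D ap ?J (App s (Nm x)) = Some (ap f a)" using same[OF xst(1)] f(1) by simp
    moreover have "eval D ap ?J (App t (Nm x)) = Some (ap g a)" using same[OF xst(2)] g(1) by simp
    ultimately have "eval D ap ?J ?n = Some (B True)"
      using eval_neq[OF lJ na] nrm_eval[OF nz iJ w(1)] nrm_eval[OF nz iJ w(2)] a0(2) by simp
    moreover have "\<forall>p\<in>F. eval D ap ?J p = Some (B True)" using m F(1) x(3) same by auto
    ultimately show "satisfiable TYPE('u) (F \<union> {?n})" unfolding satisfiable_def using lJ by blast
  qed simp
  then show ?thesis using x by blast
qed

lemma Con_rule: "is_sort \<alpha> \<Longrightarrow> eq \<alpha> s t \<in> A \<Longrightarrow> neq \<alpha> u v \<in> A \<Longrightarrow>
   A \<union> {neq \<alpha> s u, neq \<alpha> t u} \<in> Gamma_comp TYPE('u) nrm \<or> A \<union> {neq \<alpha> s v, neq \<alpha> t v} \<in> Gamma_comp TYPE('u) nrm"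
proof -
  assume h: "eq \<alpha> s t \<in> A" "neq \<alpha> u v \<in> A"
  from Gamma_fml[OF AG h(1)] have t1: "typeof (eq \<alpha> s t) = Some tyo" "nrm (eq \<alpha> s t) = eq \<alpha> s t" by auto
  from Gamma_fml[OF AG h(2)] have t2: "typeof (neg (eq \<alpha> u v)) = Some tyo" "nrm (neg (eq \<alpha> u v)) = neg (eq \<alpha> u v)"
    by (auto simp: neq_def)
  have ts: "typeof s = Some \<alpha>" "typeof t = Some \<alpha>" "typeof u = Some \<alpha>" "typeof v = Some \<alpha>"
    "typeof (eq \<alpha> u v) = Some tyo" using t1(1) t2(1) by (auto simp: typeof_eq typeof_neg)
  have "nrm (eq \<alpha> u v) = eq \<alpha> u v" using neg_parts[OF nz t2] .
  hence ns: "nrm s = s" "nrm t = t" "nrm u = u" "nrm v = v" using eq_parts[OF nz ts(5)] eq_parts[OF nz t1] by auto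
  show ?thesis
  proof (rule Gamma_or[OF AG, of _ _ "{eq \<alpha> s t, neq \<alpha> u v}"])
    fix D :: "ty \<Rightarrow> 'u dval set" and ap I
    assume l: "logical D ap I" and m: "\<forall>p\<in>{eq \<alpha> s t, neq \<alpha> u v}. eval D ap I p = Some (B True)"
    hence e: "eval D ap I s = eval D ap I t" "eval D ap I u \<noteq> eval D ap I v"
      using eval_eq[OF l ts(1,2)] eval_neq[OF l ts(3,4)] by auto
    show "(\<forall>n\<in>{neq \<alpha> s u, neq \<alpha> t u}. eval D ap I n = Some (B True)) \<or>
          (\<forall>n\<in>{neq \<alpha> s v, neq \<alpha> t v}. eval D ap I n = Some (B True))"
      using e eval_neq[OF l ts(1,3)] eval_neq[OF l ts(2,3)] eval_neq[OF l ts(1,4)] eval_neq[OF l ts(2,4)] by auto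
  qed (use h ts ns nrm_neq[OF nz] in \<open>auto simp: branch_def is_formula_def typeof_neq\<close>)
qed

lemma Compl_rule: "typeof s = Some tyo \<Longrightarrow> nrm s = s \<Longrightarrow>
   A \<union> {s} \<in> Gamma_comp TYPE('u) nrm \<or> A \<union> {neg s} \<in> Gamma_comp TYPE('u) nrm"
proof -
  assume ts: "typeof s = Some tyo" and ns: "nrm s = s"
  show ?thesis
  proof (rule Gamma_or[OF AG, of _ _ "{}"])
    fix D :: "ty \<Rightarrow> 'u dval set" and ap I
    assume l: "logical D ap I"
    show "(\<forall>n\<in>{s}. eval D ap I n = Some (B True)) \<or> (\<forall>n\<in>{neg s}. eval D ap I n = Some (B True))"
      using eval_fml[OF l ts] eval_neg[OF l ts] by auto
  qed (use ts ns nrm_neg[OF nz ts ns] in \<open>auto simp: branch_def is_formula_def typeof_neg\<close>)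
qed


lemma apps_rule:
  assumes len: "length ss = length ts"
    and ty: "typeof (apps (Nm x) ss) = Some (Base m)" "typeof (apps (Nm x) ts) = Some (Base m)"
    and nr: "nrm (apps (Nm x) ss) = apps (Nm x) ss" "nrm (apps (Nm x) ts) = apps (Nm x) ts"
    and P: "P \<subseteq> A" "finite P"
    and H: "\<And>(D::ty \<Rightarrow> 'u dval set) ap I. logical D ap I \<Longrightarrow> \<forall>p\<in>P. eval D ap I p = Some (B True)
       \<Longrightarrow> eval D ap I (apps (Nm x) ss) \<noteq> eval D ap I (apps (Nm x) ts)"
  shows "length ss \<ge> 1 \<and> (\<exists>i<length ss. A \<union> {neq (tyof (ss ! i)) (ss ! i) (ts ! i)} \<in> Gamma_comp TYPE('u) nrm)"
proof -
  have ms: "map nrm ss = ss" "map nrm ts = ts" using apps_parts[OF nz ty(1) nr(1)] apps_parts[OF nz ty(2) nr(2)] by auto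
  have tyk: "\<exists>\<sigma>. typeof (ss!k) = Some \<sigma> \<and> typeof (ts!k) = Some \<sigma>" if "k < length ss" for k
    using apps_same_types[OF ty len that] .
  have "\<exists>k\<in>{..<length ss}. A \<union> (\<lambda>i. {neq (tyof (ss ! i)) (ss ! i) (ts ! i)}) k \<in> Gamma_comp TYPE('u) nrm"
  proof (rule Gamma_ex[OF AG _ _ P])
    fix k assume k: "k \<in> {..<length ss}"
    then obtain \<sigma> where \<sigma>: "typeof (ss!k) = Some \<sigma>" "typeof (ts!k) = Some \<sigma>" using tyk by auto
    have tf: "tyof (ss!k) = \<sigma>" using \<sigma> by (simp add: tyof_def)
    have n: "nrm (ss!k) = ss!k" "nrm (ts!k) = ts!k" using ms k len by (metis lessThan_iff nth_map)+
    show "finite {neq (tyof (ss ! k)) (ss ! k) (ts ! k)} \<and> branch nrm {neq (tyof (ss ! k)) (ss ! k) (ts ! k)}"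
      using nrm_neq[OF nz \<sigma> n] \<sigma> tf by (simp add: branch_def is_formula_def typeof_neq)
  next
    fix D :: "ty \<Rightarrow> 'u dval set" and ap I
    assume l: "logical D ap I" and m: "\<forall>p\<in>P. eval D ap I p = Some (B True)"
    have "\<exists>i<length ss. eval D ap I (ss!i) \<noteq> eval D ap I (ts!i)"
    proof (rule ccontr)
      assume "\<not> ?thesis"
      hence "list_all2 (\<lambda>s t. eval D ap I s = eval D ap I t) ss ts" using len by (simp add: list_all2_conv_all_nth)
      from eval_apps_cong[OF refl this] H[OF l m] show False by simp
    qed
    then obtain i where i: "i < length ss" "eval D ap I (ss!i) \<noteq> eval D ap I (ts!i)" by blast
    then obtain \<sigma> where \<sigma>: "typeof (ss!i) = Some \<sigma>" "typeof (ts!i) = Some \<sigma>" using tyk by auto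
    have tf: "tyof (ss!i) = \<sigma>" using \<sigma> by (simp add: tyof_def)
    show "\<exists>k\<in>{..<length ss}. \<forall>n\<in>{neq (tyof (ss ! k)) (ss ! k) (ts ! k)}. eval D ap I n = Some (B True)"
      using i eval_neq[OF l \<sigma>] tf by auto
  qed simp
  then show ?thesis by (auto simp: Suc_le_eq)
qed

lemma Mat_rule: "is_var x \<Longrightarrow> length ss = length ts \<Longrightarrow> apps (Nm x) ss \<in> A \<Longrightarrow> neg (apps (Nm x) ts) \<in> A \<Longrightarrow>
  length ss \<ge> 1 \<and> (\<exists>i<length ss. A \<union> {neq (tyof (ss ! i)) (ss ! i) (ts ! i)} \<in> Gamma_comp TYPE('u) nrm)"
proof -
  assume len: "length ss = length ts" and h: "apps (Nm x) ss \<in> A" "neg (apps (Nm x) ts) \<in> A"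
  from Gamma_fml[OF AG h(1)] have t1: "typeof (apps (Nm x) ss) = Some tyo" "nrm (apps (Nm x) ss) = apps (Nm x) ss" by auto
  from Gamma_fml[OF AG h(2)] have t2: "typeof (neg (apps (Nm x) ts)) = Some tyo" "nrm (neg (apps (Nm x) ts)) = neg (apps (Nm x) ts)" by auto
  have t3: "typeof (apps (Nm x) ts) = Some tyo" using t2(1) by (simp add: typeof_neg)
  have t4: "nrm (apps (Nm x) ts) = apps (Nm x) ts" using neg_parts[OF nz t2] .
  show ?thesis
  proof (rule apps_rule[OF len t1(1) t3 t1(2) t4, of "{apps (Nm x) ss, neg (apps (Nm x) ts)}"])
    fix D :: "ty \<Rightarrow> 'u dval set" and ap I
    assume l: "logical D ap I" and m: "\<forall>p\<in>{apps (Nm x) ss, neg (apps (Nm x) ts)}. eval D ap I p = Some (B True)"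
    then show "eval D ap I (apps (Nm x) ss) \<noteq> eval D ap I (apps (Nm x) ts)" using eval_neg[OF l t3] by auto
  qed (use h in auto)
qed

lemma Dec_rule: "is_sort \<alpha> \<Longrightarrow> is_var x \<Longrightarrow> length ss = length ts \<Longrightarrow> neq \<alpha> (apps (Nm x) ss) (apps (Nm x) ts) \<in> A \<Longrightarrow>
  length ss \<ge> 1 \<and> (\<exists>i<length ss. A \<union> {neq (tyof (ss ! i)) (ss ! i) (ts ! i)} \<in> Gamma_comp TYPE('u) nrm)"
proof -
  assume so: "is_sort \<alpha>" and len: "length ss = length ts" and h: "neq \<alpha> (apps (Nm x) ss) (apps (Nm x) ts) \<in> A"
  obtain m where \<alpha>: "\<alpha> = Base (Suc m)" using so by (auto simp: is_sort_def)
  let ?e = "eq \<alpha> (apps (Nm x) ss) (apps (Nm x) ts)"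
  from Gamma_fml[OF AG h] have t: "typeof (neg ?e) = Some tyo" "nrm (neg ?e) = neg ?e" by (auto simp: neq_def)
  have ty: "typeof (apps (Nm x) ss) = Some \<alpha>" "typeof (apps (Nm x) ts) = Some \<alpha>" "typeof ?e = Some tyo"
    using t(1) by (auto simp: typeof_neg typeof_eq)
  have "nrm ?e = ?e" using neg_parts[OF nz t] .
  hence nr: "nrm (apps (Nm x) ss) = apps (Nm x) ss" "nrm (apps (Nm x) ts) = apps (Nm x) ts" using eq_parts[OF nz ty(3)] by auto
  show ?thesis
  proof (rule apps_rule[OF len ty(1,2)[unfolded \<alpha>] nr, of "{neq \<alpha> (apps (Nm x) ss) (apps (Nm x) ts)}"])
    fix D :: "ty \<Rightarrow> 'u dval set" and ap I
    assume l: "logical D ap I" and m: "\<forall>p\<in>{neq \<alpha> (apps (Nm x) ss) (apps (Nm x) ts)}. eval D ap I p = Some (B True)"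
    then show "eval D ap I (apps (Nm x) ss) \<noteq> eval D ap I (apps (Nm x) ts)" using eval_neq[OF l ty(1,2)] by auto
  qed (use h in auto)
qed

end

theorem lemma10p2:
  fixes nrm :: "tm \<Rightarrow> tm"
  assumes "normalizer TYPE('u) nrm"
  shows "acc nrm (Gamma_comp TYPE('u) nrm) \<and> complete_class nrm (Gamma_comp TYPE('u) nrm)"
proof
  show "acc nrm (Gamma_comp TYPE('u) nrm)" unfolding acc_def
  proof
    fix A assume AG: "A \<in> Gamma_comp TYPE('u) nrm"
    show "branch nrm A \<and>
     (\<forall>s. neg (neg s) \<in> A \<longrightarrow> A \<union> {s} \<in> Gamma_comp TYPE('u) nrm) \<and>
     (\<forall>s t. eq tyo s t \<in> A \<longrightarrow> A \<union> {s, t} \<in> Gamma_comp TYPE('u) nrm \<or> A \<union> {neg s, neg t} \<in> Gamma_comp TYPE('u) nrm) \<and>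
     (\<forall>s t. neq tyo s t \<in> A \<longrightarrow> A \<union> {s, neg t} \<in> Gamma_comp TYPE('u) nrm \<or> A \<union> {neg s, t} \<in> Gamma_comp TYPE('u) nrm) \<and>
     (\<forall>\<sigma> \<tau> s t. eq (Fun \<sigma> \<tau>) s t \<in> A \<longrightarrow>
        (\<forall>u. normal nrm u \<and> typeof u = Some \<sigma> \<longrightarrow>
           A \<union> {eq \<tau> (nrm (App s u)) (nrm (App t u))} \<in> Gamma_comp TYPE('u) nrm)) \<and>
     (\<forall>\<sigma> \<tau> s t. neq (Fun \<sigma> \<tau>) s t \<in> A \<longrightarrow>
        (\<exists>x. is_var x \<and> ntype x = \<sigma> \<and>
           A \<union> {neq \<tau> (nrm (App s (Nm x))) (nrm (App t (Nm x)))} \<in> Gamma_comp TYPE('u) nrm)) \<and>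
     (\<forall>x ss ts. is_var x \<and> length ss = length ts \<and>
        apps (Nm x) ss \<in> A \<and> neg (apps (Nm x) ts) \<in> A \<longrightarrow>
        length ss \<ge> 1 \<and>
        (\<exists>i<length ss. A \<union> {neq (tyof (ss ! i)) (ss ! i) (ts ! i)} \<in> Gamma_comp TYPE('u) nrm)) \<and>
     (\<forall>\<alpha> x ss ts. is_sort \<alpha> \<and> is_var x \<and> length ss = length ts \<and>
        neq \<alpha> (apps (Nm x) ss) (apps (Nm x) ts) \<in> A \<longrightarrow>
        length ss \<ge> 1 \<and>
        (\<exists>i<length ss. A \<union> {neq (tyof (ss ! i)) (ss ! i) (ts ! i)} \<in> Gamma_comp TYPE('u) nrm)) \<and>
     (\<forall>\<alpha> s t u v. is_sort \<alpha> \<and> eq \<alpha> s t \<in> A \<and> neq \<alpha> u v \<in> A \<longrightarrow>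
        A \<union> {neq \<alpha> s u, neq \<alpha> t u} \<in> Gamma_comp TYPE('u) nrm \<or> A \<union> {neq \<alpha> s v, neq \<alpha> t v} \<in> Gamma_comp TYPE('u) nrm)"
    proof (intro conjI allI impI)
      show "branch nrm A" using AG by (simp add: Gamma_comp_def)
    next
      fix s assume "neg (neg s) \<in> A" then show "A \<union> {s} \<in> Gamma_comp TYPE('u) nrm" by (rule DN_rule[OF assms AG])
    next
      fix s t assume "eq tyo s t \<in> A" then show "A \<union> {s, t} \<in> Gamma_comp TYPE('u) nrm \<or> A \<union> {neg s, neg t} \<in> Gamma_comp TYPE('u) nrm"
        by (rule BQ_rule[OF assms AG])
    next
      fix s t assume "neq tyo s t \<in> A" then show "A \<union> {s, neg t} \<in> Gamma_comp TYPE('u) nrm \<or> A \<union> {neg s, t} \<in> Gamma_comp TYPE('u) nrm"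
        by (rule BE_rule[OF assms AG])
    next
      fix \<sigma> \<tau> s t u assume "eq (Fun \<sigma> \<tau>) s t \<in> A" "normal nrm u \<and> typeof u = Some \<sigma>"
      then show "A \<union> {eq \<tau> (nrm (App s u)) (nrm (App t u))} \<in> Gamma_comp TYPE('u) nrm"
        using FQ_rule[OF assms AG] by blast
    next
      fix \<sigma> \<tau> s t assume "neq (Fun \<sigma> \<tau>) s t \<in> A"
      then show "\<exists>x. is_var x \<and> ntype x = \<sigma> \<and> A \<union> {neq \<tau> (nrm (App s (Nm x))) (nrm (App t (Nm x)))} \<in> Gamma_comp TYPE('u) nrm"
        by (rule FE_rule[OF assms AG])
    next
      fix x ss ts assume "is_var x \<and> length ss = length ts \<and> apps (Nm x) ss \<in> A \<and> neg (apps (Nm x) ts) \<in> A"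
      then show "length ss \<ge> 1" using Mat_rule[OF assms AG] by blast
    next
      fix x ss ts assume "is_var x \<and> length ss = length ts \<and> apps (Nm x) ss \<in> A \<and> neg (apps (Nm x) ts) \<in> A"
      then show "\<exists>i<length ss. A \<union> {neq (tyof (ss ! i)) (ss ! i) (ts ! i)} \<in> Gamma_comp TYPE('u) nrm"
        using Mat_rule[OF assms AG] by blast
    next
      fix \<alpha> x ss ts assume "is_sort \<alpha> \<and> is_var x \<and> length ss = length ts \<and> neq \<alpha> (apps (Nm x) ss) (apps (Nm x) ts) \<in> A"
      then show "length ss \<ge> 1" using Dec_rule[OF assms AG] by blast
    next
      fix \<alpha> x ss ts assume "is_sort \<alpha> \<and> is_var x \<and> length ss = length ts \<and> neq \<alpha> (apps (Nm x) ss) (apps (Nm x) ts) \<in> A"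
      then show "\<exists>i<length ss. A \<union> {neq (tyof (ss ! i)) (ss ! i) (ts ! i)} \<in> Gamma_comp TYPE('u) nrm"
        using Dec_rule[OF assms AG] by blast
    next
      fix \<alpha> s t u v assume "is_sort \<alpha> \<and> eq \<alpha> s t \<in> A \<and> neq \<alpha> u v \<in> A"
      then show "A \<union> {neq \<alpha> s u, neq \<alpha> t u} \<in> Gamma_comp TYPE('u) nrm \<or> A \<union> {neq \<alpha> s v, neq \<alpha> t v} \<in> Gamma_comp TYPE('u) nrm"
        using Con_rule[OF assms AG] by blast
    qed
  qed
next
  show "complete_class nrm (Gamma_comp TYPE('u) nrm)" unfolding complete_class_def
  proof (intro ballI allI impI)
    fix A s assume AG: "A \<in> Gamma_comp TYPE('u) nrm" and s: "is_formula s \<and> nrm s = s"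
    then show "A \<union> {s} \<in> Gamma_comp TYPE('u) nrm \<or> A \<union> {neg s} \<in> Gamma_comp TYPE('u) nrm"
      using Compl_rule[OF assms AG] by (simp add: is_formula_def)
  qed
qed

end
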